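(* Let $\mathcal{S}$ be a finite set of road segments and $y_1,\dots,y_N$ (collectively $y_{[N]}$) the routes of $N$ historical trips, each a nonempty set of distinct segments. For each $n$ and $s\in y_n$ one observes $T'_{n,s}=\theta_s+\varepsilon_{n,s}$, where the $\theta_s$ are i.i.d. with mean $\mu$ and variance $\tau^2>0$, independent of the errors; for each $n$ the errors $(\varepsilon_{n,s})_{s\in y_n}$ have mean $0$ and covariances $\sigma_{s,t}$; errors from different trips are independent. Suppose $\sigma_{s,t}\ge0$ for all $s,t\in\mathcal{S}$. Fix a route $y$ and a neighborhood $\delta(y)$ (a set of historical routes) such that $$N_{s\cup t}N^{\delta(y)}_sN^{\delta(y)}_t\le N^{\delta(y)}_{s\cup t}N_sN_t\quad\text{for all } s,t\in y.$$ Let $\hat\Theta^{\ast(\mathrm{seg})}_y$ be the optimal segment-based estimator and $\hat\Theta^{\ast(\mathrm{route})}_y$ the optimal route-based estimator with neighborhood $\delta(y)$. Then for any set of historical routes, $$R\big(\hat\Theta^{\ast(\mathrm{seg})}_y\mid y_{[N]}\big)\le R\big(\hat\Theta^{\ast(\mathrm{route})}_y\mid y_{[N]}\big).$$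
   Context: $N_s=|\{n:s\in y_n\}|$, $N_{s\cup t}=|\{n:s,t\in y_n\}|$, $N^{\delta(y)}_s=|\{n:y_n\in\delta(y),s\in y_n\}|$, $N^{\delta(y)}_{s\cup t}=|\{n:y_n\in\delta(y),s,t\in y_n\}|$, $M_{\delta(y)}=\sum_n\mathbf 1\{y_n\in\delta(y)\}$; convention $0/0=0$. The integrated risk is $R(\hat\Theta_y\mid y_{[N]})=\mathbb{E}[(\hat\Theta_y-\sum_{s\in y}\theta_s)^2\mid y_{[N]}]$, expectation over errors and prior of $\theta$, conditional on the historical routes. A segment-based estimator has the form $\sum_{s\in y}[(1-\phi_s(N_s))\mu+\phi_s(N_s)\sum_{n:s\in y_n}T'_{n,s}/N_s]$ with $\phi_s:\mathbb{Z}_{\ge0}\to\mathbb{R}$, $\phi_s(0)=0$; the optimal one chooses the weights to minimize the integrated risk. A route-based estimator with neighborhood $\delta(y)$ has the form $(1-\phi_{\delta(y)}(M_{\delta(y)}))|y|\mu+\phi_{\delta(y)}(M_{\delta(y)})\sum_{n:y_n\in\delta(y)}\sum_{s\in y_n}T'_{n,s}/M_{\delta(y)}$ with $\phi_{\delta(y)}(0)=0$; the optimal one chooses the weight to minimize the integrated risk. *)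

theory Defs
  imports "HOL-Probability.Probability"
begin

(* Historical routes: y :: nat => 'a set, trips indexed by n < N. *)

definition Nseg :: "nat \<Rightarrow> (nat \<Rightarrow> 'a set) \<Rightarrow> 'a \<Rightarrow> nat" where
  "Nseg N y s = card {n. n < N \<and> s \<in> y n}"

definition Npair :: "nat \<Rightarrow> (nat \<Rightarrow> 'a set) \<Rightarrow> 'a \<Rightarrow> 'a \<Rightarrow> nat" where
  "Npair N y s t = card {n. n < N \<and> s \<in> y n \<and> t \<in> y n}"

definition Nseg_nb :: "nat \<Rightarrow> (nat \<Rightarrow> 'a set) \<Rightarrow> 'a set set \<Rightarrow> 'a \<Rightarrow> nat" where
  "Nseg_nb N y D s = card {n. n < N \<and> y n \<in> D \<and> s \<in> y n}"

definition Npair_nb :: "nat \<Rightarrow> (nat \<Rightarrow> 'a set) \<Rightarrow> 'a set set \<Rightarrow> 'a \<Rightarrow> 'a \<Rightarrow> nat" where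
  "Npair_nb N y D s t = card {n. n < N \<and> y n \<in> D \<and> s \<in> y n \<and> t \<in> y n}"

definition Mnb :: "nat \<Rightarrow> (nat \<Rightarrow> 'a set) \<Rightarrow> 'a set set \<Rightarrow> nat" where
  "Mnb N y D = card {n. n < N \<and> y n \<in> D}"

definition Tobs :: "('a \<Rightarrow> 'w \<Rightarrow> real) \<Rightarrow> (nat \<Rightarrow> 'a \<Rightarrow> 'w \<Rightarrow> real) \<Rightarrow> nat \<Rightarrow> 'a \<Rightarrow> 'w \<Rightarrow> real" where
  "Tobs \<theta> \<epsilon> n s \<omega> = \<theta> s \<omega> + \<epsilon> n s \<omega>"

(* segment-based estimator with weight functions phi_s (phi s 0 = 0); division 0/0 = 0 *)
definition seg_est :: "nat \<Rightarrow> (nat \<Rightarrow> 'a set) \<Rightarrow> ('a \<Rightarrow> 'w \<Rightarrow> real) \<Rightarrow> (nat \<Rightarrow> 'a \<Rightarrow> 'w \<Rightarrow> real)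
    \<Rightarrow> real \<Rightarrow> 'a set \<Rightarrow> ('a \<Rightarrow> nat \<Rightarrow> real) \<Rightarrow> 'w \<Rightarrow> real" where
  "seg_est N y \<theta> \<epsilon> \<mu> yy \<phi> \<omega> =
     (\<Sum>s\<in>yy. (1 - \<phi> s (Nseg N y s)) * \<mu>
        + \<phi> s (Nseg N y s) * ((\<Sum>n\<in>{n. n < N \<and> s \<in> y n}. Tobs \<theta> \<epsilon> n s \<omega>) / real (Nseg N y s)))"

(* route-based estimator with neighbourhood D and weight function phi (phi 0 = 0) *)
definition route_est :: "nat \<Rightarrow> (nat \<Rightarrow> 'a set) \<Rightarrow> ('a \<Rightarrow> 'w \<Rightarrow> real) \<Rightarrow> (nat \<Rightarrow> 'a \<Rightarrow> 'w \<Rightarrow> real)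
    \<Rightarrow> real \<Rightarrow> 'a set \<Rightarrow> 'a set set \<Rightarrow> (nat \<Rightarrow> real) \<Rightarrow> 'w \<Rightarrow> real" where
  "route_est N y \<theta> \<epsilon> \<mu> yy D \<phi> \<omega> =
     (1 - \<phi> (Mnb N y D)) * real (card yy) * \<mu>
     + \<phi> (Mnb N y D) * ((\<Sum>n\<in>{n. n < N \<and> y n \<in> D}. \<Sum>s\<in>y n. Tobs \<theta> \<epsilon> n s \<omega>) / real (Mnb N y D))"

(* integrated risk: E[(Theta_hat - sum_{s in y} theta_s)^2], routes fixed *)
definition risk :: "'w measure \<Rightarrow> ('a \<Rightarrow> 'w \<Rightarrow> real) \<Rightarrow> 'a set \<Rightarrow> ('w \<Rightarrow> real) \<Rightarrow> real" where
  "risk M \<theta> yy \<Theta> = (\<integral>\<omega>. (\<Theta> \<omega> - (\<Sum>s\<in>yy. \<theta> s \<omega>))\<^sup>2 \<partial>M)"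

(* joint random element: index Inl s -> theta_s, index Inr n -> error vector of trip n *)
definition model_var :: "(nat \<Rightarrow> 'a set) \<Rightarrow> ('a \<Rightarrow> 'w \<Rightarrow> real) \<Rightarrow> (nat \<Rightarrow> 'a \<Rightarrow> 'w \<Rightarrow> real)
    \<Rightarrow> 'a + nat \<Rightarrow> 'w \<Rightarrow> ('a \<Rightarrow> real)" where
  "model_var y \<theta> \<epsilon> i \<omega> = (case i of Inl s \<Rightarrow> (\<lambda>t\<in>{s}. \<theta> s \<omega>)
                                    | Inr n \<Rightarrow> (\<lambda>t\<in>y n. \<epsilon> n t \<omega>))"

definition model_space :: "(nat \<Rightarrow> 'a set) \<Rightarrow> 'a + nat \<Rightarrow> ('a \<Rightarrow> real) measure" where
  "model_space y i = (case i of Inl s \<Rightarrow> PiM {s} (\<lambda>_. borel)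
                               | Inr n \<Rightarrow> PiM (y n) (\<lambda>_. borel))"

end

theory Submission imports Defs begin

lemma (in prob_space) indep_pair_real:
  assumes ind: "indep_vars M' X I" and "i \<in> I" "j \<in> I" "i \<noteq> j"
    and f: "f \<in> measurable (M' i) borel" and g: "g \<in> measurable (M' j) borel"
  shows "indep_var borel (\<lambda>\<omega>. f (X i \<omega>)) borel (\<lambda>\<omega>. g (X j \<omega>))"
proof -
  have "indep_var borel ((\<lambda>h. f (h i)) \<circ> (\<lambda>\<omega>. restrict (\<lambda>k. X k \<omega>) {i}))
                   borel ((\<lambda>h. g (h j)) \<circ> (\<lambda>\<omega>. restrict (\<lambda>k. X k \<omega>) {j}))"
    using assms
    by (intro indep_var_compose[OF indep_var_restrict[OF ind]])
       (auto intro!: measurable_compose[OF measurable_component_singleton])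
  then show ?thesis by (simp add: comp_def)
qed

lemma (in prob_space) quad_expect:
  fixes Z :: "'i \<Rightarrow> 'a \<Rightarrow> real"
  assumes fin: "finite J"
    and intZ: "\<And>i. i \<in> J \<Longrightarrow> integrable M (Z i)"
    and meanZ: "\<And>i. i \<in> J \<Longrightarrow> expectation (Z i) = 0"
    and intZZ: "\<And>i j. i \<in> J \<Longrightarrow> j \<in> J \<Longrightarrow> integrable M (\<lambda>\<omega>. Z i \<omega> * Z j \<omega>)"
    and covZ: "\<And>i j. i \<in> J \<Longrightarrow> j \<in> J \<Longrightarrow> expectation (\<lambda>\<omega>. Z i \<omega> * Z j \<omega>) = K i j"
  shows "expectation (\<lambda>\<omega>. (b + (\<Sum>i\<in>J. w i * Z i \<omega>))\<^sup>2) = b\<^sup>2 + (\<Sum>i\<in>J. \<Sum>j\<in>J. w i * w j * K i j)"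
proof -
  have eq: "(\<lambda>\<omega>. (b + (\<Sum>i\<in>J. w i * Z i \<omega>))\<^sup>2) =
     (\<lambda>\<omega>. b\<^sup>2 + ((\<Sum>i\<in>J. (2*b*w i) * Z i \<omega>) + (\<Sum>i\<in>J. \<Sum>j\<in>J. (w i * w j) * (Z i \<omega> * Z j \<omega>))))"
  proof
    fix \<omega>
    have "(\<Sum>i\<in>J. w i * Z i \<omega>)\<^sup>2 = (\<Sum>i\<in>J. \<Sum>j\<in>J. (w i * w j) * (Z i \<omega> * Z j \<omega>))"
      by (simp add: power2_eq_square sum_product algebra_simps)
    moreover have "(\<Sum>i\<in>J. (2*b*w i) * Z i \<omega>) = 2*b*(\<Sum>i\<in>J. w i * Z i \<omega>)"
      by (simp add: sum_distrib_left algebra_simps)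
    ultimately show "(b + (\<Sum>i\<in>J. w i * Z i \<omega>))\<^sup>2 =
      b\<^sup>2 + ((\<Sum>i\<in>J. (2*b*w i) * Z i \<omega>) + (\<Sum>i\<in>J. \<Sum>j\<in>J. (w i * w j) * (Z i \<omega> * Z j \<omega>)))"
      by (simp add: power2_eq_square algebra_simps)
  qed
  have i1: "integrable M (\<lambda>\<omega>. \<Sum>i\<in>J. (2*b*w i) * Z i \<omega>)"
    by (rule Bochner_Integration.integrable_sum, rule integrable_mult_right, rule intZ) auto
  have i2: "integrable M (\<lambda>\<omega>. \<Sum>i\<in>J. \<Sum>j\<in>J. (w i * w j) * (Z i \<omega> * Z j \<omega>))"
    by (rule Bochner_Integration.integrable_sum, rule Bochner_Integration.integrable_sum, rule integrable_mult_right, rule intZZ) auto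
  have e1: "expectation (\<lambda>\<omega>. \<Sum>i\<in>J. (2*b*w i) * Z i \<omega>) = 0"
    using intZ meanZ by (subst Bochner_Integration.integral_sum) (auto intro!: integrable_mult_right)
  have e2: "expectation (\<lambda>\<omega>. \<Sum>i\<in>J. \<Sum>j\<in>J. (w i * w j) * (Z i \<omega> * Z j \<omega>)) = (\<Sum>i\<in>J. \<Sum>j\<in>J. w i * w j * K i j)"
    using intZZ covZ
    by (auto simp: Bochner_Integration.integral_sum Bochner_Integration.integrable_sum intro!: sum.cong integrable_mult_right)
  show ?thesis
    unfolding eq using i1 i2 e1 e2
    apply (subst Bochner_Integration.integral_add)
      apply (simp, rule Bochner_Integration.integrable_add[OF i1 i2])
    apply (subst Bochner_Integration.integral_add[OF i1 i2])
    apply (simp add: prob_space)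
    done
qed

definition Kf :: "real \<Rightarrow> ('a \<Rightarrow> 'a \<Rightarrow> real) \<Rightarrow> 'a + nat \<times> 'a \<Rightarrow> 'a + nat \<times> 'a \<Rightarrow> real" where
  "Kf t2 \<sigma> i j = (case i of Inl s \<Rightarrow> (case j of Inl t \<Rightarrow> if s = t then t2 else 0 | Inr _ \<Rightarrow> 0)
       | Inr (n, s) \<Rightarrow> (case j of Inl _ \<Rightarrow> 0 | Inr (m, t) \<Rightarrow> if n = m then \<sigma> s t else 0))"

lemma QF:
  fixes w :: "'a + nat \<times> 'a \<Rightarrow> real"
  assumes finS: "finite S" and yS: "\<And>n. n < N \<Longrightarrow> y n \<subseteq> S"
  shows "(\<Sum>i\<in>Inl ` S \<union> Inr ` (SIGMA n:{..<N}. y n). \<Sum>j\<in>Inl ` S \<union> Inr ` (SIGMA n:{..<N}. y n).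
            w i * w j * Kf tt \<sigma> i j)
       = tt * (\<Sum>s\<in>S. (w (Inl s))\<^sup>2) + (\<Sum>n<N. \<Sum>s\<in>y n. \<Sum>t\<in>y n. w (Inr (n, s)) * w (Inr (n, t)) * \<sigma> s t)"
proof -
  define Sg where "Sg = (SIGMA n:{..<N}. y n)"
  have fy: "\<And>n. n < N \<Longrightarrow> finite (y n)" using yS finS finite_subset by blast
  have fSg: "finite Sg" unfolding Sg_def using fy by (intro finite_SigmaI) auto
  have split: "\<And>f. (\<Sum>i\<in>Inl ` S \<union> Inr ` Sg. f i) = (\<Sum>s\<in>S. f (Inl s)) + (\<Sum>p\<in>Sg. f (Inr p))"
    by (subst sum.union_disjoint) (auto simp: finS fSg sum.reindex)
  have sig: "\<And>f. (\<Sum>p\<in>Sg. f p) = (\<Sum>n<N. \<Sum>s\<in>y n. f (n, s))"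
    unfolding Sg_def using fy by (subst sum.Sigma) auto
  have A: "\<And>s. s \<in> S \<Longrightarrow> (\<Sum>j\<in>Inl ` S \<union> Inr ` Sg. w (Inl s) * w j * Kf tt \<sigma> (Inl s) j) = tt * (w (Inl s))\<^sup>2"
    using finS by (simp add: split Kf_def power2_eq_square case_prod_beta if_distrib cong: if_cong)
  have B: "\<And>n s. n < N \<Longrightarrow> (\<Sum>j\<in>Inl ` S \<union> Inr ` Sg. w (Inr (n, s)) * w j * Kf tt \<sigma> (Inr (n, s)) j)
      = (\<Sum>t\<in>y n. w (Inr (n, s)) * w (Inr (n, t)) * \<sigma> s t)"
  proof -
    fix n s assume n: "n < N"
    have "(\<Sum>j\<in>Inl ` S \<union> Inr ` Sg. w (Inr (n, s)) * w j * Kf tt \<sigma> (Inr (n, s)) j)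
       = (\<Sum>m<N. \<Sum>t\<in>y m. if n = m then w (Inr (n, s)) * w (Inr (m, t)) * \<sigma> s t else 0)"
      by (simp add: split sig Kf_def, intro sum.cong refl) auto
    also have "\<dots> = (\<Sum>m<N. if n = m then (\<Sum>t\<in>y m. w (Inr (n, s)) * w (Inr (m, t)) * \<sigma> s t) else 0)"
      by (intro sum.cong) auto
    also have "\<dots> = (\<Sum>t\<in>y n. w (Inr (n, s)) * w (Inr (n, t)) * \<sigma> s t)"
      using n by (simp add: sum.delta)
    finally show "?thesis n s" .
  qed
  have "(\<Sum>i\<in>Inl ` S \<union> Inr ` Sg. \<Sum>j\<in>Inl ` S \<union> Inr ` Sg. w i * w j * Kf tt \<sigma> i j)
      = (\<Sum>s\<in>S. tt * (w (Inl s))\<^sup>2) + (\<Sum>n<N. \<Sum>s\<in>y n. \<Sum>t\<in>y n. w (Inr (n, s)) * w (Inr (n, t)) * \<sigma> s t)"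
    unfolding split[of "\<lambda>i. \<Sum>j\<in>Inl ` S \<union> Inr ` Sg. w i * w j * Kf tt \<sigma> i j"] sig
    using A B by simp
  then show ?thesis unfolding Sg_def by (simp add: sum_distrib_left)
qed

lemma swap1:
  fixes h :: "nat \<Rightarrow> 'a \<Rightarrow> real"
  assumes "finite A" "\<And>n. n < N \<Longrightarrow> finite (y n)"
  shows "(\<Sum>s\<in>A. \<Sum>n\<in>{n. n < N \<and> s \<in> y n}. h n s) = (\<Sum>n<N. \<Sum>s\<in>y n. if s \<in> A then h n s else 0)"
proof -
  have "(\<Sum>s\<in>A. \<Sum>n\<in>{n. n < N \<and> s \<in> y n}. h n s) = (\<Sum>s\<in>A. \<Sum>n<N. if s \<in> y n then h n s else 0)"
  proof (rule sum.cong[OF refl])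
    fix s
    have e1: "{n. n < N \<and> s \<in> y n} = {n\<in>{..<N}. s \<in> y n}" by auto
    show "(\<Sum>n\<in>{n. n < N \<and> s \<in> y n}. h n s) = (\<Sum>n<N. if s \<in> y n then h n s else 0)"
      by (simp only: e1 sum.inter_filter[OF finite_lessThan])
  qed
  also have "\<dots> = (\<Sum>n<N. \<Sum>s\<in>A. if s \<in> y n then h n s else 0)"
    by (rule sum.swap)
  also have "\<dots> = (\<Sum>n<N. \<Sum>s\<in>y n. if s \<in> A then h n s else 0)"
  proof (rule sum.cong[OF refl])
    fix n assume "n \<in> {..<N}"
    then have fn: "finite (y n)" using assms by auto
    have "{s\<in>A. s \<in> y n} = {s\<in>y n. s \<in> A}" by auto
    then show "(\<Sum>s\<in>A. if s \<in> y n then h n s else 0) = (\<Sum>s\<in>y n. if s \<in> A then h n s else 0)"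
      using fn assms(1) by (simp add: sum.inter_filter[symmetric])
  qed
  finally show ?thesis .
qed

lemma dbl:
  fixes g :: "'a \<Rightarrow> 'a \<Rightarrow> real"
  assumes "finite B"
  shows "(\<Sum>s\<in>B. \<Sum>t\<in>B. if s \<in> C \<and> t \<in> C then g s t else 0) = (\<Sum>s\<in>{x\<in>B. x\<in>C}. \<Sum>t\<in>{x\<in>B. x\<in>C}. g s t)"
proof -
  have "(\<Sum>s\<in>B. \<Sum>t\<in>B. if s \<in> C \<and> t \<in> C then g s t else 0)
     = (\<Sum>s\<in>B. if s \<in> C then (\<Sum>t\<in>B. if t \<in> C then g s t else 0) else 0)"
    by (intro sum.cong refl) auto
  also have "\<dots> = (\<Sum>s\<in>{x\<in>B. x\<in>C}. \<Sum>t\<in>{x\<in>B. x\<in>C}. g s t)"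
    using assms by (simp add: sum.inter_filter)
  finally show ?thesis .
qed

lemma count_swap:
  fixes g :: "'a \<Rightarrow> 'a \<Rightarrow> real" and y :: "nat \<Rightarrow> 'a set"
  assumes fA: "finite A" and fy: "\<And>n. n < N \<Longrightarrow> finite (y n)"
  shows "(\<Sum>n<N. if P n then (\<Sum>s\<in>y n. \<Sum>t\<in>y n. if s \<in> A \<and> t \<in> A then g s t else 0) else 0)
       = (\<Sum>s\<in>A. \<Sum>t\<in>A. g s t * real (card {n. n < N \<and> P n \<and> s \<in> y n \<and> t \<in> y n}))"
proof -
  have inner: "\<And>n. n < N \<Longrightarrow> (\<Sum>s\<in>y n. \<Sum>t\<in>y n. if s \<in> A \<and> t \<in> A then g s t else 0)
     = (\<Sum>s\<in>A. \<Sum>t\<in>A. if s \<in> y n \<and> t \<in> y n then g s t else 0)"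
  proof -
    fix n assume n: "n < N"
    have e: "{x\<in>y n. x\<in>A} = {x\<in>A. x\<in>y n}" by auto
    show "?thesis n" using dbl[OF fy[OF n], of A g] dbl[OF fA, of "y n" g] e by simp
  qed
  have "(\<Sum>n<N. if P n then (\<Sum>s\<in>y n. \<Sum>t\<in>y n. if s \<in> A \<and> t \<in> A then g s t else 0) else 0)
     = (\<Sum>n<N. \<Sum>s\<in>A. \<Sum>t\<in>A. if P n \<and> s \<in> y n \<and> t \<in> y n then g s t else 0)"
    using inner by (intro sum.cong refl) (auto intro!: sum.neutral)
  also have "\<dots> = (\<Sum>s\<in>A. \<Sum>t\<in>A. \<Sum>n<N. if P n \<and> s \<in> y n \<and> t \<in> y n then g s t else 0)"
    by (subst sum.swap) (intro sum.cong refl, rule sum.swap)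
  also have "\<dots> = (\<Sum>s\<in>A. \<Sum>t\<in>A. g s t * real (card {n. n < N \<and> P n \<and> s \<in> y n \<and> t \<in> y n}))"
  proof (intro sum.cong refl)
    fix s t
    have e: "{n \<in> {..<N}. P n \<and> s \<in> y n \<and> t \<in> y n} = {n. n < N \<and> P n \<and> s \<in> y n \<and> t \<in> y n}" by auto
    have "(\<Sum>n<N. if P n \<and> s \<in> y n \<and> t \<in> y n then g s t else 0) = (\<Sum>n\<in>{n \<in> {..<N}. P n \<and> s \<in> y n \<and> t \<in> y n}. g s t)"
      by (subst sum.inter_filter) simp_all
    then show "(\<Sum>n<N. if P n \<and> s \<in> y n \<and> t \<in> y n then g s t else 0) = g s t * real (card {n. n < N \<and> P n \<and> s \<in> y n \<and> t \<in> y n})"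
      unfolding e by simp
  qed
  finally show ?thesis .
qed


lemma swapD:
  fixes y :: "nat \<Rightarrow> 'a set" and f :: "'a \<Rightarrow> real"
  assumes finS: "finite S" and yS: "\<And>n. n < N \<Longrightarrow> y n \<subseteq> S"
  shows "(\<Sum>n\<in>{n. n < N \<and> Q n}. \<Sum>s\<in>y n. f s) = (\<Sum>s\<in>S. real (card {n. n < N \<and> Q n \<and> s \<in> y n}) * f s)"
proof -
  have fD: "finite {n. n < N \<and> Q n}" by simp
  have "(\<Sum>n\<in>{n. n < N \<and> Q n}. \<Sum>s\<in>y n. f s) = (\<Sum>n\<in>{n. n < N \<and> Q n}. \<Sum>s\<in>S. if s \<in> y n then f s else 0)"
  proof (rule sum.cong[OF refl])
    fix n assume "n \<in> {n. n < N \<and> Q n}"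
    then have e: "{s \<in> S. s \<in> y n} = y n" using yS by auto
    show "(\<Sum>s\<in>y n. f s) = (\<Sum>s\<in>S. if s \<in> y n then f s else 0)"
      using sum.inter_filter[OF finS, of f "\<lambda>s. s \<in> y n"] e by simp
  qed
  also have "\<dots> = (\<Sum>s\<in>S. \<Sum>n\<in>{n. n < N \<and> Q n}. if s \<in> y n then f s else 0)"
    by (rule sum.swap)
  also have "\<dots> = (\<Sum>s\<in>S. real (card {n. n < N \<and> Q n \<and> s \<in> y n}) * f s)"
  proof (rule sum.cong[OF refl])
    fix s
    have e: "{n \<in> {n. n < N \<and> Q n}. s \<in> y n} = {n. n < N \<and> Q n \<and> s \<in> y n}" by auto
    show "(\<Sum>n\<in>{n. n < N \<and> Q n}. if s \<in> y n then f s else 0) = real (card {n. n < N \<and> Q n \<and> s \<in> y n}) * f s"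
      using sum.inter_filter[OF fD, of "\<lambda>_. f s" "\<lambda>n. s \<in> y n"] e by simp
  qed
  finally show ?thesis .
qed

lemma term_ineq:
  fixes a b ns nt pp pd :: nat and q \<sigma> :: real
  assumes "\<sigma> \<ge> 0" "pp * a * b \<le> pd * ns * nt"
  shows "(q * real a / real ns) * (q * real b / real nt) * \<sigma> * real pp \<le> q * q * \<sigma> * real pd"
proof (cases "ns = 0 \<or> nt = 0")
  case True then show ?thesis using assms by auto
next
  case False
  then have pos: "real ns * real nt > 0" by simp
  have h: "real pp * real a * real b \<le> real pd * (real ns * real nt)"
    using assms(2) by (metis of_nat_le_iff of_nat_mult mult.assoc)
  have "(q * real a / real ns) * (q * real b / real nt) * \<sigma> * real pp
      = (q * q * \<sigma>) * ((real pp * real a * real b) / (real ns * real nt))"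
    by (simp add: field_simps)
  also have "\<dots> \<le> (q * q * \<sigma>) * real pd"
    using h pos assms(1) by (intro mult_left_mono) (simp_all add: divide_le_eq)
  finally show ?thesis by simp
qed

lemma absprod: "\<bar>a * b\<bar> \<le> a\<^sup>2 + (b::real)\<^sup>2"
proof -
  have "0 \<le> (\<bar>a\<bar> - \<bar>b\<bar>)\<^sup>2" by simp
  then have "2 * (\<bar>a\<bar> * \<bar>b\<bar>) \<le> \<bar>a\<bar>\<^sup>2 + \<bar>b\<bar>\<^sup>2" by (simp add: power2_diff)
  moreover have "\<bar>a\<bar> * \<bar>b\<bar> \<ge> 0" by simp
  moreover have "\<bar>a * b\<bar> = \<bar>a\<bar> * \<bar>b\<bar>" by (simp add: abs_mult)
  moreover have "\<bar>a\<bar>\<^sup>2 = a\<^sup>2" "\<bar>b\<bar>\<^sup>2 = b\<^sup>2" by simp_all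
  ultimately show ?thesis by linarith
qed

theorem theorem2p5:
  fixes M :: "'w measure"
    and S :: "'a set" and N :: nat and y :: "nat \<Rightarrow> 'a set"
    and \<theta> :: "'a \<Rightarrow> 'w \<Rightarrow> real" and \<epsilon> :: "nat \<Rightarrow> 'a \<Rightarrow> 'w \<Rightarrow> real"
    and \<mu> \<tau> :: real and \<sigma> :: "'a \<Rightarrow> 'a \<Rightarrow> real"
    and yy :: "'a set" and D :: "'a set set"
  assumes P: "prob_space M"
    and S_fin: "finite S"
    and routes: "\<And>n. n < N \<Longrightarrow> y n \<subseteq> S \<and> y n \<noteq> {}"
    and route_y: "yy \<subseteq> S" "yy \<noteq> {}"
    and theta_rv: "\<And>s. s \<in> S \<Longrightarrow> \<theta> s \<in> borel_measurable M"
    and theta_sq: "\<And>s. s \<in> S \<Longrightarrow> integrable M (\<lambda>\<omega>. (\<theta> s \<omega>)\<^sup>2)"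
    and theta_id: "\<And>s t. s \<in> S \<Longrightarrow> t \<in> S \<Longrightarrow> distr M borel (\<theta> s) = distr M borel (\<theta> t)"
    and theta_mean: "\<And>s. s \<in> S \<Longrightarrow> prob_space.expectation M (\<theta> s) = \<mu>"
    and theta_var: "\<And>s. s \<in> S \<Longrightarrow> prob_space.variance M (\<theta> s) = \<tau>\<^sup>2"
    and tau_pos: "\<tau>\<^sup>2 > 0"
    and eps_rv: "\<And>n s. n < N \<Longrightarrow> s \<in> y n \<Longrightarrow> \<epsilon> n s \<in> borel_measurable M"
    and eps_sq: "\<And>n s. n < N \<Longrightarrow> s \<in> y n \<Longrightarrow> integrable M (\<lambda>\<omega>. (\<epsilon> n s \<omega>)\<^sup>2)"
    and eps_mean: "\<And>n s. n < N \<Longrightarrow> s \<in> y n \<Longrightarrow> prob_space.expectation M (\<epsilon> n s) = 0"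
    and eps_cov: "\<And>n s t. n < N \<Longrightarrow> s \<in> y n \<Longrightarrow> t \<in> y n \<Longrightarrow>
                   prob_space.expectation M (\<lambda>\<omega>. \<epsilon> n s \<omega> * \<epsilon> n t \<omega>) = \<sigma> s t"
    and indep: "prob_space.indep_vars M (model_space y) (model_var y \<theta> \<epsilon>) (Inl ` S \<union> Inr ` {..<N})"
    and sigma_nonneg: "\<And>s t. s \<in> S \<Longrightarrow> t \<in> S \<Longrightarrow> \<sigma> s t \<ge> 0"
    and nbhd: "\<And>s t. s \<in> yy \<Longrightarrow> t \<in> yy \<Longrightarrow>
       Npair N y s t * Nseg_nb N y D s * Nseg_nb N y D t \<le> Npair_nb N y D s t * Nseg N y s * Nseg N y t"
  shows "(INF \<phi>\<in>{\<phi> :: 'a \<Rightarrow> nat \<Rightarrow> real. \<forall>s. \<phi> s 0 = 0}. risk M \<theta> yy (seg_est N y \<theta> \<epsilon> \<mu> yy \<phi>))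
       \<le> (INF \<phi>\<in>{\<phi> :: nat \<Rightarrow> real. \<phi> 0 = 0}. risk M \<theta> yy (route_est N y \<theta> \<epsilon> \<mu> yy D \<phi>))"
proof -
  interpret p: prob_space M by (rule P)
  have fy: "\<And>n. n < N \<Longrightarrow> finite (y n)" using routes S_fin finite_subset by blast
  have yS: "\<And>n. n < N \<Longrightarrow> y n \<subseteq> S" using routes by blast
  have fyy: "finite yy" using route_y S_fin finite_subset by blast
  define Z :: "'a + nat \<times> 'a \<Rightarrow> 'w \<Rightarrow> real" where
    "Z = (\<lambda>i \<omega>. case i of Inl s \<Rightarrow> \<theta> s \<omega> - \<mu> | Inr (n, s) \<Rightarrow> \<epsilon> n s \<omega>)"
  define J where "J = Inl ` S \<union> Inr ` (SIGMA n:{..<N}. y n)"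
  have finJ: "finite J" unfolding J_def using S_fin fy by (auto intro!: finite_SigmaI)
  have Jc: "\<And>i P. i \<in> J \<Longrightarrow> (\<And>s. i = Inl s \<Longrightarrow> s \<in> S \<Longrightarrow> P) \<Longrightarrow>
      (\<And>n s. i = Inr (n, s) \<Longrightarrow> n < N \<Longrightarrow> s \<in> y n \<Longrightarrow> P) \<Longrightarrow> P"
    unfolding J_def by auto
  have thint: "\<And>s. s \<in> S \<Longrightarrow> integrable M (\<theta> s)"
    using p.square_integrable_imp_integrable theta_rv theta_sq by blast
  have epsint: "\<And>n s. n < N \<Longrightarrow> s \<in> y n \<Longrightarrow> integrable M (\<epsilon> n s)"
    using p.square_integrable_imp_integrable eps_rv eps_sq by blast
  have measZ: "\<And>i. i \<in> J \<Longrightarrow> Z i \<in> borel_measurable M"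
    by (erule Jc) (auto simp: Z_def theta_rv eps_rv intro!: borel_measurable_diff)
  have intZ: "\<And>i. i \<in> J \<Longrightarrow> integrable M (Z i)"
    by (erule Jc) (auto simp: Z_def thint epsint)
  have meanZ: "\<And>i. i \<in> J \<Longrightarrow> p.expectation (Z i) = 0"
    by (erule Jc) (auto simp: Z_def thint eps_mean theta_mean p.prob_space)
  have sqZ: "\<And>i. i \<in> J \<Longrightarrow> integrable M (\<lambda>\<omega>. (Z i \<omega>)\<^sup>2)"
  proof -
    fix i assume iJ: "i \<in> J"
    show "integrable M (\<lambda>\<omega>. (Z i \<omega>)\<^sup>2)"
  proof (rule Jc[OF iJ])
    fix s assume i: "i = Inl s" and s: "s \<in> S"
    have e: "(\<lambda>\<omega>. (Z i \<omega>)\<^sup>2) = (\<lambda>\<omega>. ((\<theta> s \<omega>)\<^sup>2 + (-2*\<mu>) * \<theta> s \<omega>) + \<mu>\<^sup>2)"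
      by (auto simp: i Z_def power2_eq_square algebra_simps)
    show "integrable M (\<lambda>\<omega>. (Z i \<omega>)\<^sup>2)" unfolding e
      using theta_sq[OF s] thint[OF s] by simp
  next
    fix n s assume "i = Inr (n, s)" "n < N" "s \<in> y n"
    then show "integrable M (\<lambda>\<omega>. (Z i \<omega>)\<^sup>2)" using eps_sq by (simp add: Z_def)
  qed
  qed
  have intZZ: "\<And>i j. i \<in> J \<Longrightarrow> j \<in> J \<Longrightarrow> integrable M (\<lambda>\<omega>. Z i \<omega> * Z j \<omega>)"
  proof -
    fix i j assume i: "i \<in> J" and j: "j \<in> J"
    show "integrable M (\<lambda>\<omega>. Z i \<omega> * Z j \<omega>)"
    proof (rule Bochner_Integration.integrable_bound[of _ "\<lambda>\<omega>. (Z i \<omega>)\<^sup>2 + (Z j \<omega>)\<^sup>2"])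
      show "integrable M (\<lambda>\<omega>. (Z i \<omega>)\<^sup>2 + (Z j \<omega>)\<^sup>2)"
        using sqZ[OF i] sqZ[OF j] by simp
      show "(\<lambda>\<omega>. Z i \<omega> * Z j \<omega>) \<in> borel_measurable M"
        using measZ[OF i] measZ[OF j] by simp
      show "AE x in M. norm (Z i x * Z j x) \<le> norm ((Z i x)\<^sup>2 + (Z j x)\<^sup>2)"
        using absprod by simp
    qed
  qed
  define grp :: "'a + nat \<times> 'a \<Rightarrow> 'a + nat" where
    "grp = (\<lambda>i. case i of Inl s \<Rightarrow> Inl s | Inr (n, s) \<Rightarrow> Inr n)"
  define proj :: "'a + nat \<times> 'a \<Rightarrow> ('a \<Rightarrow> real) \<Rightarrow> real" where
    "proj = (\<lambda>i h. case i of Inl s \<Rightarrow> h s - \<mu> | Inr (n, s) \<Rightarrow> h s)"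
  have grpI: "\<And>i. i \<in> J \<Longrightarrow> grp i \<in> Inl ` S \<union> Inr ` {..<N}"
    by (erule Jc) (auto simp: grp_def)
  have projM: "\<And>i. i \<in> J \<Longrightarrow> proj i \<in> borel_measurable (model_space y (grp i))"
    by (erule Jc) (auto simp: grp_def proj_def model_space_def
        intro!: borel_measurable_diff measurable_component_singleton)
  have Zeq: "\<And>i. i \<in> J \<Longrightarrow> (\<lambda>\<omega>. proj i (model_var y \<theta> \<epsilon> (grp i) \<omega>)) = Z i"
    by (erule Jc) (auto simp: grp_def proj_def model_var_def Z_def)
  have indZ: "\<And>i j. i \<in> J \<Longrightarrow> j \<in> J \<Longrightarrow> grp i \<noteq> grp j \<Longrightarrow> p.indep_var borel (Z i) borel (Z j)"
  proof -
    fix i j assume i: "i \<in> J" and j: "j \<in> J" and ne: "grp i \<noteq> grp j"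
    show "p.indep_var borel (Z i) borel (Z j)"
      using p.indep_pair_real[OF indep grpI[OF i] grpI[OF j] ne projM[OF i] projM[OF j]]
      unfolding Zeq[OF i] Zeq[OF j] .
  qed
  have covZ: "\<And>i j. i \<in> J \<Longrightarrow> j \<in> J \<Longrightarrow> p.expectation (\<lambda>\<omega>. Z i \<omega> * Z j \<omega>) = Kf (\<tau>\<^sup>2) \<sigma> i j"
  proof -
    fix i j assume i: "i \<in> J" and j: "j \<in> J"
    show "p.expectation (\<lambda>\<omega>. Z i \<omega> * Z j \<omega>) = Kf (\<tau>\<^sup>2) \<sigma> i j"
    proof (cases "grp i = grp j")
      case False
      have "p.expectation (\<lambda>\<omega>. Z i \<omega> * Z j \<omega>) = p.expectation (Z i) * p.expectation (Z j)"
        by (rule p.indep_var_lebesgue_integral[OF indZ[OF i j False] intZ[OF i] intZ[OF j]])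
      also have "\<dots> = 0" using meanZ[OF i] by simp
      also have "0 = Kf (\<tau>\<^sup>2) \<sigma> i j"
        using False by (auto simp: grp_def Kf_def split: sum.splits prod.splits)
      finally show ?thesis .
    next
      case True
      show ?thesis
      proof (rule Jc[OF i])
        fix s assume iis: "i = Inl s" and s: "s \<in> S"
        then have js: "j = Inl s" using True by (auto simp: grp_def split: sum.splits prod.splits)
        have "p.expectation (\<lambda>\<omega>. Z i \<omega> * Z j \<omega>) = p.variance (\<theta> s)"
          using theta_mean[OF s] by (simp add: iis js Z_def power2_eq_square)
        then show ?thesis using theta_var[OF s] by (simp add: iis js Kf_def)
      next
        fix n s assume iis: "i = Inr (n, s)" and n: "n < N" and s: "s \<in> y n"
        from True iis obtain t where js: "j = Inr (n, t)"
          by (cases j) (auto simp: grp_def split: prod.splits)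
        have t: "t \<in> y n" using j js unfolding J_def by auto
        show ?thesis using eps_cov[OF n s t] by (simp add: iis js Kf_def Z_def)
      qed
    qed
  qed
  define QF where "QF = (\<lambda>w::'a + nat \<times> 'a \<Rightarrow> real. \<tau>\<^sup>2 * (\<Sum>s\<in>S. (w (Inl s))\<^sup>2)
      + (\<Sum>n<N. \<Sum>s\<in>y n. \<Sum>t\<in>y n. w (Inr (n, s)) * w (Inr (n, t)) * \<sigma> s t))"
  have QFfull: "\<And>b w. p.expectation (\<lambda>\<omega>. (b + (\<Sum>i\<in>J. w i * Z i \<omega>))\<^sup>2) = b\<^sup>2 + QF w"
  proof -
    fix b w
    show "p.expectation (\<lambda>\<omega>. (b + (\<Sum>i\<in>J. w i * Z i \<omega>))\<^sup>2) = b\<^sup>2 + QF w"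
      using p.quad_expect[OF finJ intZ meanZ intZZ covZ, where b=b and w=w] QF[OF S_fin yS, where w=w and tt="\<tau>\<^sup>2" and \<sigma>=\<sigma>]
      unfolding QF_def J_def by simp
  qed
  have riskQ: "\<And>\<Theta> b w. (\<And>\<omega>. \<Theta> \<omega> - (\<Sum>s\<in>yy. \<theta> s \<omega>) = b + (\<Sum>i\<in>J. w i * Z i \<omega>))
      \<Longrightarrow> risk M \<theta> yy \<Theta> = b\<^sup>2 + QF w"
  proof -
    fix \<Theta> b w assume h: "\<And>\<omega>. \<Theta> \<omega> - (\<Sum>s\<in>yy. \<theta> s \<omega>) = b + (\<Sum>i\<in>J. w i * Z i \<omega>)"
    have "(\<lambda>\<omega>. (\<Theta> \<omega> - (\<Sum>s\<in>yy. \<theta> s \<omega>))\<^sup>2) = (\<lambda>\<omega>. (b + (\<Sum>i\<in>J. w i * Z i \<omega>))\<^sup>2)"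
      using h by simp
    then show "risk M \<theta> yy \<Theta> = b\<^sup>2 + QF w" unfolding risk_def using QFfull by simp
  qed
  have Jsum: "\<And>w \<omega>. (\<Sum>i\<in>J. w i * Z i \<omega>) = (\<Sum>s\<in>S. w (Inl s) * (\<theta> s \<omega> - \<mu>))
      + (\<Sum>n<N. \<Sum>s\<in>y n. w (Inr (n, s)) * \<epsilon> n s \<omega>)"
  proof -
    fix w \<omega>
    have fSg: "finite (SIGMA n:{..<N}. y n)" using fy by (intro finite_SigmaI) auto
    have "(\<Sum>i\<in>J. w i * Z i \<omega>) = (\<Sum>s\<in>S. w (Inl s) * Z (Inl s) \<omega>) + (\<Sum>p\<in>(SIGMA n:{..<N}. y n). w (Inr p) * Z (Inr p) \<omega>)"
      unfolding J_def by (subst sum.union_disjoint) (auto simp: S_fin fSg sum.reindex)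
    also have "(\<Sum>p\<in>(SIGMA n:{..<N}. y n). w (Inr p) * Z (Inr p) \<omega>) = (\<Sum>n<N. \<Sum>s\<in>y n. w (Inr (n, s)) * Z (Inr (n, s)) \<omega>)"
      using fy by (subst sum.Sigma) auto
    finally show "?thesis w \<omega>" by (simp add: Z_def)
  qed
  have rnonneg: "\<And>\<Theta>. risk M \<theta> yy \<Theta> \<ge> 0" unfolding risk_def by simp
  have key: "\<And>\<phi>. \<exists>\<phi>'. (\<forall>s. \<phi>' s 0 = 0) \<and>
      risk M \<theta> yy (seg_est N y \<theta> \<epsilon> \<mu> yy \<phi>') \<le> risk M \<theta> yy (route_est N y \<theta> \<epsilon> \<mu> yy D \<phi>)"
  proof -
    fix \<phi> :: "nat \<Rightarrow> real"
    define c where "c = \<phi> (Mnb N y D)"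
    define q where "q = c / real (Mnb N y D)"
    define Nd where "Nd = (\<lambda>s. real (Nseg_nb N y D s))"
    define Ns where "Ns = (\<lambda>s. real (Nseg N y s))"
    define \<phi>s where "\<phi>s = (\<lambda>s (k::nat). if k = 0 then 0 else q * Nd s)"
    have Nd0: "\<And>s. Nseg N y s = 0 \<Longrightarrow> Nd s = 0"
    proof -
      fix s assume "Nseg N y s = 0"
      moreover have "Nseg_nb N y D s \<le> Nseg N y s"
        unfolding Nseg_nb_def Nseg_def by (rule card_mono) auto
      ultimately show "Nd s = 0" by (simp add: Nd_def)
    qed
    have pval: "\<And>s. \<phi>s s (Nseg N y s) = q * Nd s"
      using Nd0 by (simp add: \<phi>s_def)
    define wS :: "'a + nat \<times> 'a \<Rightarrow> real" where
      "wS = (\<lambda>i. case i of Inl s \<Rightarrow> if s \<in> yy then q * Nd s - 1 else 0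
                   | Inr (n, s) \<Rightarrow> if s \<in> yy then q * Nd s / Ns s else 0)"
    have segId: "\<And>\<omega>. seg_est N y \<theta> \<epsilon> \<mu> yy \<phi>s \<omega> - (\<Sum>s\<in>yy. \<theta> s \<omega>) = 0 + (\<Sum>i\<in>J. wS i * Z i \<omega>)"
    proof -
      fix \<omega>
      have trm: "\<And>s. (1 - \<phi>s s (Nseg N y s)) * \<mu> + \<phi>s s (Nseg N y s) *
           ((\<Sum>n\<in>{n. n < N \<and> s \<in> y n}. Tobs \<theta> \<epsilon> n s \<omega>) / real (Nseg N y s)) - \<theta> s \<omega>
         = (q * Nd s - 1) * (\<theta> s \<omega> - \<mu>) + (\<Sum>n\<in>{n. n < N \<and> s \<in> y n}. (q * Nd s / Ns s) * \<epsilon> n s \<omega>)"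
      proof -
        fix s
        have T: "(\<Sum>n\<in>{n. n < N \<and> s \<in> y n}. Tobs \<theta> \<epsilon> n s \<omega>) = Ns s * \<theta> s \<omega> + (\<Sum>n\<in>{n. n < N \<and> s \<in> y n}. \<epsilon> n s \<omega>)"
          by (simp add: Tobs_def sum.distrib Ns_def Nseg_def)
        show "?thesis s"
        proof (cases "Nseg N y s = 0")
          case True
          then show ?thesis using Nd0[OF True] by (simp add: \<phi>s_def Ns_def algebra_simps)
        next
          case False
          then have nz: "Ns s \<noteq> 0" by (simp add: Ns_def)
          have Nr: "real (Nseg N y s) = Ns s" by (simp add: Ns_def)
          have S2: "(\<Sum>n\<in>{n. n < N \<and> s \<in> y n}. (q * Nd s / Ns s) * \<epsilon> n s \<omega>)
              = (q * Nd s / Ns s) * (\<Sum>n\<in>{n. n < N \<and> s \<in> y n}. \<epsilon> n s \<omega>)"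
            by (simp add: sum_distrib_left)
          show ?thesis unfolding pval T Nr S2 using nz
            by (simp add: field_simps)
        qed
      qed
      have "seg_est N y \<theta> \<epsilon> \<mu> yy \<phi>s \<omega> - (\<Sum>s\<in>yy. \<theta> s \<omega>)
          = (\<Sum>s\<in>yy. (q * Nd s - 1) * (\<theta> s \<omega> - \<mu>)) + (\<Sum>s\<in>yy. \<Sum>n\<in>{n. n < N \<and> s \<in> y n}. (q * Nd s / Ns s) * \<epsilon> n s \<omega>)"
      proof -
        have "seg_est N y \<theta> \<epsilon> \<mu> yy \<phi>s \<omega> - (\<Sum>s\<in>yy. \<theta> s \<omega>) = (\<Sum>s\<in>yy. (1 - \<phi>s s (Nseg N y s)) * \<mu> + \<phi>s s (Nseg N y s) *
           ((\<Sum>n\<in>{n. n < N \<and> s \<in> y n}. Tobs \<theta> \<epsilon> n s \<omega>) / real (Nseg N y s)) - \<theta> s \<omega>)"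
          unfolding seg_est_def by (simp only: sum_subtractf)
        also have "\<dots> = (\<Sum>s\<in>yy. (q * Nd s - 1) * (\<theta> s \<omega> - \<mu>) + (\<Sum>n\<in>{n. n < N \<and> s \<in> y n}. (q * Nd s / Ns s) * \<epsilon> n s \<omega>))"
          by (simp only: trm)
        finally show ?thesis by (simp only: sum.distrib)
      qed
      also have "(\<Sum>s\<in>yy. (q * Nd s - 1) * (\<theta> s \<omega> - \<mu>)) = (\<Sum>s\<in>S. wS (Inl s) * (\<theta> s \<omega> - \<mu>))"
      proof -
        have e: "{s \<in> S. s \<in> yy} = yy" using route_y by auto
        show ?thesis using sum.inter_filter[OF S_fin, of "\<lambda>s. (q * Nd s - 1) * (\<theta> s \<omega> - \<mu>)" "\<lambda>s. s \<in> yy"]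
          unfolding e by (simp add: wS_def, intro sum.cong refl) auto
      qed
      also have "(\<Sum>s\<in>yy. \<Sum>n\<in>{n. n < N \<and> s \<in> y n}. (q * Nd s / Ns s) * \<epsilon> n s \<omega>)
          = (\<Sum>n<N. \<Sum>s\<in>y n. wS (Inr (n, s)) * \<epsilon> n s \<omega>)"
        by (subst swap1[OF fyy fy]) (auto simp: wS_def intro!: sum.cong)
      finally show "?thesis \<omega>" using Jsum by simp
    qed
    define Dn where "Dn = {n. n < N \<and> y n \<in> D}"
    define bR where "bR = (1 - c) * real (card yy) * \<mu> + q * (\<Sum>n\<in>Dn. real (card (y n))) * \<mu> - real (card yy) * \<mu>"
    define wR :: "'a + nat \<times> 'a \<Rightarrow> real" where
      "wR = (\<lambda>i. case i of Inl s \<Rightarrow> q * Nd s - (if s \<in> yy then 1 else 0)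
                   | Inr (n, s) \<Rightarrow> if y n \<in> D then q else 0)"
    have routeId: "\<And>\<omega>. route_est N y \<theta> \<epsilon> \<mu> yy D \<phi> \<omega> - (\<Sum>s\<in>yy. \<theta> s \<omega>) = bR + (\<Sum>i\<in>J. wR i * Z i \<omega>)"
    proof -
      fix \<omega>
      define T1 where "T1 = (\<Sum>s\<in>S. Nd s * (\<theta> s \<omega> - \<mu>))"
      define T2 where "T2 = (\<Sum>s\<in>S. (if s \<in> yy then 1 else 0) * (\<theta> s \<omega> - \<mu>))"
      define E where "E = (\<Sum>n\<in>Dn. \<Sum>s\<in>y n. \<epsilon> n s \<omega>)"
      define C where "C = (\<Sum>n\<in>Dn. real (card (y n)))"
      have X: "(\<Sum>n\<in>Dn. \<Sum>s\<in>y n. Tobs \<theta> \<epsilon> n s \<omega>) = C * \<mu> + T1 + E"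
      proof -
        have "(\<Sum>n\<in>Dn. \<Sum>s\<in>y n. Tobs \<theta> \<epsilon> n s \<omega>) = (\<Sum>n\<in>Dn. \<Sum>s\<in>y n. \<mu> + (\<theta> s \<omega> - \<mu>) + \<epsilon> n s \<omega>)"
          by (simp add: Tobs_def)
        also have "\<dots> = C * \<mu> + (\<Sum>n\<in>Dn. \<Sum>s\<in>y n. \<theta> s \<omega> - \<mu>) + E"
        proof -
          have per: "\<And>n. (\<Sum>s\<in>y n. \<mu> + (\<theta> s \<omega> - \<mu>) + \<epsilon> n s \<omega>) = real (card (y n)) * \<mu> + (\<Sum>s\<in>y n. \<theta> s \<omega> - \<mu>) + (\<Sum>s\<in>y n. \<epsilon> n s \<omega>)"
            by (simp only: sum.distrib sum_constant)
          show ?thesis by (simp only: sum.distrib C_def E_def sum_constant sum_distrib_right)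
        qed
        also have "(\<Sum>n\<in>Dn. \<Sum>s\<in>y n. \<theta> s \<omega> - \<mu>) = T1"
          unfolding Dn_def T1_def Nd_def Nseg_nb_def by (rule swapD[OF S_fin yS])
        finally show ?thesis .
      qed
      have Y: "(\<Sum>s\<in>yy. \<theta> s \<omega>) = real (card yy) * \<mu> + T2"
      proof -
        have e: "{s \<in> S. s \<in> yy} = yy" using route_y by auto
        have "T2 = (\<Sum>s\<in>yy. \<theta> s \<omega> - \<mu>)"
          unfolding T2_def using sum.inter_filter[OF S_fin, of "\<lambda>s. \<theta> s \<omega> - \<mu>" "\<lambda>s. s \<in> yy"] e
          by (simp, intro sum.cong refl) auto
        then show ?thesis by (simp add: sum_subtractf)
      qed
      have W1: "(\<Sum>s\<in>S. wR (Inl s) * (\<theta> s \<omega> - \<mu>)) = q * T1 - T2"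
        by (simp add: wR_def T1_def T2_def sum_distrib_left left_diff_distrib sum_subtractf mult.assoc)
      have W2: "(\<Sum>n<N. \<Sum>s\<in>y n. wR (Inr (n, s)) * \<epsilon> n s \<omega>) = q * E"
      proof -
        have "(\<Sum>n<N. \<Sum>s\<in>y n. wR (Inr (n, s)) * \<epsilon> n s \<omega>) = (\<Sum>n<N. if y n \<in> D then q * (\<Sum>s\<in>y n. \<epsilon> n s \<omega>) else 0)"
          by (rule sum.cong[OF refl]) (simp add: wR_def sum_distrib_left)
        also have "\<dots> = (\<Sum>n\<in>Dn. q * (\<Sum>s\<in>y n. \<epsilon> n s \<omega>))"
        proof -
          have eD: "Dn = {n \<in> {..<N}. y n \<in> D}" unfolding Dn_def by auto
          show ?thesis by (simp only: eD sum.inter_filter[OF finite_lessThan])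
        qed
        finally show ?thesis by (simp add: E_def sum_distrib_left)
      qed
      have R: "route_est N y \<theta> \<epsilon> \<mu> yy D \<phi> \<omega> = (1 - c) * real (card yy) * \<mu> + q * (C * \<mu> + T1 + E)"
      proof -
        have M: "Mnb N y D = card Dn" unfolding Mnb_def Dn_def ..
        have "route_est N y \<theta> \<epsilon> \<mu> yy D \<phi> \<omega> = (1 - c) * real (card yy) * \<mu> + c * ((C * \<mu> + T1 + E) / real (Mnb N y D))"
          unfolding route_est_def c_def[symmetric] using X unfolding Dn_def by simp
        then show ?thesis by (simp add: q_def)
      qed
      show "?thesis \<omega>" unfolding R Y Jsum W1 W2 bR_def C_def[symmetric] by (simp add: algebra_simps)
    qed
    have rS: "risk M \<theta> yy (seg_est N y \<theta> \<epsilon> \<mu> yy \<phi>s) = 0\<^sup>2 + QF wS"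
      by (rule riskQ[OF segId])
    have rR: "risk M \<theta> yy (route_est N y \<theta> \<epsilon> \<mu> yy D \<phi>) = bR\<^sup>2 + QF wR"
      by (rule riskQ[OF routeId])
    have i1: "(\<Sum>s\<in>S. (wS (Inl s))\<^sup>2) \<le> (\<Sum>s\<in>S. (wR (Inl s))\<^sup>2)"
      by (rule sum_mono) (simp add: wS_def wR_def)
    define g where "g = (\<lambda>s t. (q * Nd s / Ns s) * (q * Nd t / Ns t) * \<sigma> s t)"
    have i2a: "(\<Sum>n<N. \<Sum>s\<in>y n. \<Sum>t\<in>y n. wS (Inr (n, s)) * wS (Inr (n, t)) * \<sigma> s t)
        = (\<Sum>n<N. if True then (\<Sum>s\<in>y n. \<Sum>t\<in>y n. if s \<in> yy \<and> t \<in> yy then g s t else 0) else 0)"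
      by (auto simp: wS_def g_def intro!: sum.cong)
    also have "\<dots> = (\<Sum>s\<in>yy. \<Sum>t\<in>yy. g s t * real (card {n. n < N \<and> True \<and> s \<in> y n \<and> t \<in> y n}))"
      by (rule count_swap[OF fyy fy])
    also have "\<dots> \<le> (\<Sum>s\<in>yy. \<Sum>t\<in>yy. q * q * \<sigma> s t * real (card {n. n < N \<and> y n \<in> D \<and> s \<in> y n \<and> t \<in> y n}))"
    proof (intro sum_mono)
      fix s t assume s: "s \<in> yy" and t: "t \<in> yy"
      have "\<sigma> s t \<ge> 0" using s t route_y sigma_nonneg by auto
      from term_ineq[OF this nbhd[OF s t], of q]
      show "g s t * real (card {n. n < N \<and> True \<and> s \<in> y n \<and> t \<in> y n})
          \<le> q * q * \<sigma> s t * real (card {n. n < N \<and> y n \<in> D \<and> s \<in> y n \<and> t \<in> y n})"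
        by (simp add: g_def Nd_def Ns_def Npair_def Npair_nb_def)
    qed
    also have "\<dots> = (\<Sum>n<N. if y n \<in> D then (\<Sum>s\<in>y n. \<Sum>t\<in>y n. if s \<in> yy \<and> t \<in> yy then q * q * \<sigma> s t else 0) else 0)"
      by (rule count_swap[OF fyy fy, symmetric])
    also have "\<dots> \<le> (\<Sum>n<N. \<Sum>s\<in>y n. \<Sum>t\<in>y n. wR (Inr (n, s)) * wR (Inr (n, t)) * \<sigma> s t)"
    proof (rule sum_mono)
      fix n assume n: "n \<in> {..<N}"
      show "(if y n \<in> D then (\<Sum>s\<in>y n. \<Sum>t\<in>y n. if s \<in> yy \<and> t \<in> yy then q * q * \<sigma> s t else 0) else 0)
          \<le> (\<Sum>s\<in>y n. \<Sum>t\<in>y n. wR (Inr (n, s)) * wR (Inr (n, t)) * \<sigma> s t)"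
      proof (cases "y n \<in> D")
        case True
        have "(\<Sum>s\<in>y n. \<Sum>t\<in>y n. if s \<in> yy \<and> t \<in> yy then q * q * \<sigma> s t else 0)
            \<le> (\<Sum>s\<in>y n. \<Sum>t\<in>y n. q * q * \<sigma> s t)"
        proof (intro sum_mono)
          fix s t assume "s \<in> y n" "t \<in> y n"
          then have "\<sigma> s t \<ge> 0" using yS[of n] n sigma_nonneg by blast
          then show "(if s \<in> yy \<and> t \<in> yy then q * q * \<sigma> s t else 0) \<le> q * q * \<sigma> s t" by simp
        qed
        then show ?thesis using True by (simp add: wR_def)
      next
        case False
        then show ?thesis by (simp add: wR_def)
      qed
    qed
    finally have i2: "(\<Sum>n<N. \<Sum>s\<in>y n. \<Sum>t\<in>y n. wS (Inr (n, s)) * wS (Inr (n, t)) * \<sigma> s t)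
        \<le> (\<Sum>n<N. \<Sum>s\<in>y n. \<Sum>t\<in>y n. wR (Inr (n, s)) * wR (Inr (n, t)) * \<sigma> s t)" .
    have "\<tau>\<^sup>2 * (\<Sum>s\<in>S. (wS (Inl s))\<^sup>2) \<le> \<tau>\<^sup>2 * (\<Sum>s\<in>S. (wR (Inl s))\<^sup>2)"
      using i1 by (intro mult_left_mono) auto
    then have "QF wS \<le> QF wR" using i2 unfolding QF_def by linarith
    then have "risk M \<theta> yy (seg_est N y \<theta> \<epsilon> \<mu> yy \<phi>s) \<le> risk M \<theta> yy (route_est N y \<theta> \<epsilon> \<mu> yy D \<phi>)"
      unfolding rS rR by (simp add: add_increasing)
    moreover have "\<forall>s. \<phi>s s 0 = 0" by (simp add: \<phi>s_def)
    ultimately show "?thesis \<phi>" by blast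
  qed
  have bdd: "bdd_below ((\<lambda>\<phi>. risk M \<theta> yy (seg_est N y \<theta> \<epsilon> \<mu> yy \<phi>)) ` {\<phi> :: 'a \<Rightarrow> nat \<Rightarrow> real. \<forall>s. \<phi> s 0 = 0})"
    by (rule bdd_belowI[of _ 0]) (auto intro: rnonneg)
  show ?thesis
  proof (rule cINF_greatest)
    show "{\<phi> :: nat \<Rightarrow> real. \<phi> 0 = 0} \<noteq> {}" by (auto intro: exI[of _ "\<lambda>_. 0"])
  next
    fix \<phi> :: "nat \<Rightarrow> real" assume "\<phi> \<in> {\<phi>. \<phi> 0 = 0}"
    obtain \<phi>' where "\<forall>s. \<phi>' s 0 = 0"
      "risk M \<theta> yy (seg_est N y \<theta> \<epsilon> \<mu> yy \<phi>') \<le> risk M \<theta> yy (route_est N y \<theta> \<epsilon> \<mu> yy D \<phi>)"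
      using key by blast
    then show "(INF \<phi>\<in>{\<phi> :: 'a \<Rightarrow> nat \<Rightarrow> real. \<forall>s. \<phi> s 0 = 0}. risk M \<theta> yy (seg_est N y \<theta> \<epsilon> \<mu> yy \<phi>))
        \<le> risk M \<theta> yy (route_est N y \<theta> \<epsilon> \<mu> yy D \<phi>)"
      by (intro cINF_lower2[OF bdd]) auto
  qed
qed

end
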